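(* Let $\mathcal R:[0,1]\times[0,\infty)\to\mathbb C$ be a measurable function for which the integrals below converge absolutely (e.g. $\mathcal R$ bounded). Then for $\lambda\in(0,1)$, \begin{align*} &\int_0^{\pi/2}\left[ \int_0^{\pi/2}\frac{\mathcal R(\cos\theta,\tan\phi)\,d\phi}{\sqrt{1-\lambda\cos^2\phi}} \right]\frac{d\theta}{\sqrt{1-\lambda\cos^2\theta}}\\={}&\int_0^{\pi/2}\left[ \int_0^{\pi/2}\mathcal R\left( \frac{\cos\theta}{\sqrt{1-\lambda\sin^2\theta\sin^2\phi}}, \sqrt{\frac{1-\lambda(1-\sin^2\theta\cos^2\phi)}{1-\lambda\sin^2\theta\sin^2\phi}}\tan\phi\right)\frac{d\phi}{\sqrt{1-\lambda+\lambda^{2}\sin^2\theta\sin^2\phi\cos^2\phi}} \right]d\theta\\={}&\int_{S^2_{+++}}\mathcal R\left(\frac{Z}{\sqrt{1-\lambda Y^{2}}},\sqrt{\frac{1-\lambda(1-X^{2})}{1-\lambda Y^{2}}} \frac{Y}{X}\right)\frac{d\sigma}{\sqrt{(1-\lambda)(1-Z^2)+\lambda^{2}Y^2X^2}}, \end{align*} where $S^2_{+++}=\{(X,Y,Z)\in\mathbb R^3:X^2+Y^2+Z^2=1,X,Y,Z>0\}$ with $(X,Y,Z)=(\sin\theta\cos\phi,\sin\theta\sin\phi,\cos\theta)$ and surface element $d\sigma=\sin\theta\,d\theta\,d\phi$. *)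

theory Defs
  imports "HOL-Analysis.Analysis"
begin

definition octant_param :: "real \<times> real \<Rightarrow> real \<times> real \<times> real" where
  "octant_param q = (sin (fst q) * cos (snd q), sin (fst q) * sin (snd q), cos (fst q))"

definition octant_square :: "(real \<times> real) set" where
  "octant_square = {0<..<pi/2} \<times> {0<..<pi/2}"

definition octant_surface_integrand ::
    "(real \<times> real \<times> real \<Rightarrow> complex) \<Rightarrow> real \<times> real \<Rightarrow> complex" where
  "octant_surface_integrand f q = sin (fst q) *\<^sub>R f (octant_param q)"

definition octant_surface_integral :: "(real \<times> real \<times> real \<Rightarrow> complex) \<Rightarrow> complex" where
  "octant_surface_integral f =
     (LINT q : octant_square | lborel \<Otimes>\<^sub>M lborel. octant_surface_integrand f q)"

definition lhs_integrand :: "(real \<times> real \<Rightarrow> complex) \<Rightarrow> real \<Rightarrow> real \<Rightarrow> real \<Rightarrow> complex" where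
  "lhs_integrand R l t p =
     (1 / (sqrt (1 - l * (cos p)\<^sup>2) * sqrt (1 - l * (cos t)\<^sup>2))) *\<^sub>R R (cos t, tan p)"

definition mid_integrand :: "(real \<times> real \<Rightarrow> complex) \<Rightarrow> real \<Rightarrow> real \<Rightarrow> real \<Rightarrow> complex" where
  "mid_integrand R l t p =
     (1 / sqrt (1 - l + l\<^sup>2 * (sin t)\<^sup>2 * (sin p)\<^sup>2 * (cos p)\<^sup>2)) *\<^sub>R
       R (cos t / sqrt (1 - l * (sin t)\<^sup>2 * (sin p)\<^sup>2),
          sqrt ((1 - l * (1 - (sin t)\<^sup>2 * (cos p)\<^sup>2)) / (1 - l * (sin t)\<^sup>2 * (sin p)\<^sup>2)) * tan p)"

definition rhs_integrand :: "(real \<times> real \<Rightarrow> complex) \<Rightarrow> real \<Rightarrow> real \<times> real \<times> real \<Rightarrow> complex" where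
  "rhs_integrand R l v = (case v of (X, Y, Z) \<Rightarrow>
     (1 / sqrt ((1 - l) * (1 - Z\<^sup>2) + l\<^sup>2 * Y\<^sup>2 * X\<^sup>2)) *\<^sub>R
       R (Z / sqrt (1 - l * Y\<^sup>2), sqrt ((1 - l * (1 - X\<^sup>2)) / (1 - l * Y\<^sup>2)) * (Y / X)))"

end

theory Submission
  imports Defs
begin


lemma set_integrable_lborel_abs:
  fixes f :: "real \<Rightarrow> 'b::euclidean_space"
  assumes "set_borel_measurable lborel A f"
  shows "set_integrable lborel A f \<longleftrightarrow> f absolutely_integrable_on A"
  using assms unfolding set_integrable_def set_borel_measurable_def
  by (simp add: integrable_completion)

lemma cov_real:
  fixes f g g' :: "real \<Rightarrow> real"
  assumes S: "S \<in> sets lebesgue" and gS: "g ` S = T"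
    and der: "\<And>x. x \<in> S \<Longrightarrow> (g has_field_derivative g' x) (at x within S)"
    and inj: "inj_on g S"
    and mf: "set_borel_measurable lborel T f"
    and mh: "set_borel_measurable lborel S (\<lambda>x. \<bar>g' x\<bar> * f (g x))"
  shows "(set_integrable lborel T f \<longleftrightarrow> set_integrable lborel S (\<lambda>x. \<bar>g' x\<bar> * f (g x))) \<and>
         (LINT x:T|lborel. f x) = (LINT x:S|lborel. \<bar>g' x\<bar> * f (g x))"
proof -
  note cv = has_absolute_integral_change_of_variables_1'[OF S der inj]
  have i1: "set_integrable lborel T f \<longleftrightarrow> f absolutely_integrable_on T"
    by (rule set_integrable_lborel_abs[OF mf])
  have i2: "set_integrable lborel S (\<lambda>x. \<bar>g' x\<bar> * f (g x)) \<longleftrightarrow> (\<lambda>x. \<bar>g' x\<bar> * f (g x)) absolutely_integrable_on S"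
    by (rule set_integrable_lborel_abs[OF mh])
  have iff: "set_integrable lborel T f \<longleftrightarrow> set_integrable lborel S (\<lambda>x. \<bar>g' x\<bar> * f (g x))"
    unfolding i1 i2 using cv[of f "integral S (\<lambda>x. \<bar>g' x\<bar> * f (g x))"] cv[of f "integral T f"] gS by auto
  show ?thesis
  proof (cases "set_integrable lborel T f")
    case True
    then have h: "set_integrable lborel S (\<lambda>x. \<bar>g' x\<bar> * f (g x))" using iff by simp
    have "integral S (\<lambda>x. \<bar>g' x\<bar> * f (g x)) = integral T f"
      using cv[of f "integral T f"] True i1 gS by auto
    then show ?thesis using iff set_borel_integral_eq_integral(2)[OF True] set_borel_integral_eq_integral(2)[OF h]
      by simp
  next
    case False
    then have h: "\<not> set_integrable lborel S (\<lambda>x. \<bar>g' x\<bar> * f (g x))" using iff by simp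
    show ?thesis using False h iff unfolding set_integrable_def set_lebesgue_integral_def
      by (simp add: not_integrable_integral_eq)
  qed
qed




lemma set_integrable_complex_iff:
  fixes f :: "real \<Rightarrow> complex"
  shows "set_integrable M A f \<longleftrightarrow> set_integrable M A (\<lambda>x. Re (f x)) \<and> set_integrable M A (\<lambda>x. Im (f x))"
proof
  assume "set_integrable M A f"
  then show "set_integrable M A (\<lambda>x. Re (f x)) \<and> set_integrable M A (\<lambda>x. Im (f x))"
    unfolding set_integrable_def
    using integrable_Re integrable_Im by fastforce
next
  assume a: "set_integrable M A (\<lambda>x. Re (f x)) \<and> set_integrable M A (\<lambda>x. Im (f x))"
  have e: "(\<lambda>x. indicat_real A x *\<^sub>R f x) = (\<lambda>x. complex_of_real (indicat_real A x *\<^sub>R Re (f x)) + \<i> * complex_of_real (indicat_real A x *\<^sub>R Im (f x)))"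
    by (auto simp: complex_eq_iff)
  have 1: "integrable M (\<lambda>x. complex_of_real (indicat_real A x *\<^sub>R Re (f x)))"
    by (rule complex_of_real_integrable_eq[THEN iffD2]) (use a in \<open>simp add: set_integrable_def\<close>)
  have 2: "integrable M (\<lambda>x. complex_of_real (indicat_real A x *\<^sub>R Im (f x)))"
    by (rule complex_of_real_integrable_eq[THEN iffD2]) (use a in \<open>simp add: set_integrable_def\<close>)
  show "set_integrable M A f"
    unfolding set_integrable_def e
    by (rule Bochner_Integration.integrable_add[OF 1 integrable_mult_right[OF 2]])
qed

lemma set_integral_complex:
  fixes f :: "real \<Rightarrow> complex"
  assumes "set_integrable M A f"
  shows "(LINT x:A|M. f x) = Complex (LINT x:A|M. Re (f x)) (LINT x:A|M. Im (f x))"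
proof -
  have i: "integrable M (\<lambda>x. indicat_real A x *\<^sub>R f x)" using assms unfolding set_integrable_def .
  have "Re (integral\<^sup>L M (\<lambda>x. indicat_real A x *\<^sub>R f x)) = integral\<^sup>L M (\<lambda>x. Re (indicat_real A x *\<^sub>R f x))"
    by (rule integral_Re[OF i, symmetric])
  moreover have "Im (integral\<^sup>L M (\<lambda>x. indicat_real A x *\<^sub>R f x)) = integral\<^sup>L M (\<lambda>x. Im (indicat_real A x *\<^sub>R f x))"
    by (rule integral_Im[OF i, symmetric])
  ultimately show ?thesis unfolding set_lebesgue_integral_def by (simp add: complex_eq_iff)
qed

lemma cov_complex:
  fixes f :: "real \<Rightarrow> complex" and g g' :: "real \<Rightarrow> real"
  assumes S: "S \<in> sets lebesgue" and gS: "g ` S = T"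
    and der: "\<And>x. x \<in> S \<Longrightarrow> (g has_field_derivative g' x) (at x within S)"
    and inj: "inj_on g S"
    and mf: "set_borel_measurable lborel T f"
    and mh: "set_borel_measurable lborel S (\<lambda>x. \<bar>g' x\<bar> *\<^sub>R f (g x))"
  shows "(set_integrable lborel T f \<longleftrightarrow> set_integrable lborel S (\<lambda>x. \<bar>g' x\<bar> *\<^sub>R f (g x))) \<and>
         (LINT x:T|lborel. f x) = (LINT x:S|lborel. \<bar>g' x\<bar> *\<^sub>R f (g x))"
proof -
  have mRe: "set_borel_measurable lborel T (\<lambda>x. Re (f x))" "set_borel_measurable lborel T (\<lambda>x. Im (f x))"
    using measurable_compose[OF mf[unfolded set_borel_measurable_def] borel_measurable_Re]
      measurable_compose[OF mf[unfolded set_borel_measurable_def] borel_measurable_Im]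
    unfolding set_borel_measurable_def by (simp_all add: o_def)
  have mRe2: "set_borel_measurable lborel S (\<lambda>x. \<bar>g' x\<bar> * Re (f (g x)))" "set_borel_measurable lborel S (\<lambda>x. \<bar>g' x\<bar> * Im (f (g x)))"
    using measurable_compose[OF mh[unfolded set_borel_measurable_def] borel_measurable_Re]
      measurable_compose[OF mh[unfolded set_borel_measurable_def] borel_measurable_Im]
    unfolding set_borel_measurable_def by (simp_all add: o_def mult.assoc)
  note c1 = cov_real[OF S gS der inj mRe(1) mRe2(1)]
  note c2 = cov_real[OF S gS der inj mRe(2) mRe2(2)]
  have iff: "set_integrable lborel T f \<longleftrightarrow> set_integrable lborel S (\<lambda>x. \<bar>g' x\<bar> *\<^sub>R f (g x))"
    using c1 c2 by (simp add: set_integrable_complex_iff[of _ _ f] set_integrable_complex_iff[of _ _ "\<lambda>x. \<bar>g' x\<bar> *\<^sub>R f (g x)"])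
  show ?thesis
  proof (cases "set_integrable lborel T f")
    case True
    then have h: "set_integrable lborel S (\<lambda>x. \<bar>g' x\<bar> *\<^sub>R f (g x))" using iff by simp
    show ?thesis using iff c1 c2 set_integral_complex[OF True] set_integral_complex[OF h] by simp
  next
    case False
    then have h: "\<not> set_integrable lborel S (\<lambda>x. \<bar>g' x\<bar> *\<^sub>R f (g x))" using iff by simp
    show ?thesis using False h iff unfolding set_integrable_def set_lebesgue_integral_def
      by (simp add: not_integrable_integral_eq)
  qed
qed




definition Gm :: "real \<Rightarrow> real \<Rightarrow> real" where "Gm c q = arctan (c * tan q)"

lemma Gm_in: assumes "c > 0" "q \<in> {0<..<pi/2}" shows "Gm c q \<in> {0<..<pi/2}"
  using assms tan_gt_zero[of q] arctan_ubound[of "c * tan q"] by (auto simp: Gm_def)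

lemma Gm_tan: "tan (Gm c q) = c * tan q"
  by (simp add: Gm_def tan_arctan)

lemma Gm_cos: assumes "q \<in> {0<..<pi/2}"
  shows "cos (Gm c q) = cos q / sqrt ((cos q)\<^sup>2 + c\<^sup>2 * (sin q)\<^sup>2)"
proof -
  have cq: "cos q > 0" using assms by (auto intro!: cos_gt_zero_pi)
  have "1 + (c * tan q)\<^sup>2 = ((cos q)\<^sup>2 + c\<^sup>2 * (sin q)\<^sup>2) / (cos q)\<^sup>2"
    using cq by (simp add: tan_def field_simps power2_eq_square)
  then have "sqrt (1 + (c * tan q)\<^sup>2) = sqrt ((cos q)\<^sup>2 + c\<^sup>2 * (sin q)\<^sup>2) / cos q"
    using cq by (simp add: real_sqrt_divide)
  then show ?thesis using cq by (simp add: Gm_def cos_arctan)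
qed

lemma Gm_deriv: assumes "q \<in> {0<..<pi/2}"
  shows "(Gm c has_real_derivative c / ((cos q)\<^sup>2 + c\<^sup>2 * (sin q)\<^sup>2)) (at q)"
proof -
  have cq: "cos q > 0" using assms by (auto intro!: cos_gt_zero_pi)
  have "((\<lambda>q. arctan (c * tan q)) has_real_derivative inverse (1 + (c * tan q)\<^sup>2) * (c * inverse ((cos q)\<^sup>2))) (at q)"
    using cq by (auto intro!: derivative_eq_intros DERIV_arctan[THEN DERIV_chain2])
  moreover have "inverse (1 + (c * tan q)\<^sup>2) * (c * inverse ((cos q)\<^sup>2)) = c / ((cos q)\<^sup>2 + c\<^sup>2 * (sin q)\<^sup>2)"
  proof -
    have "(cos q)\<^sup>2 + c\<^sup>2 * (sin q)\<^sup>2 > 0" using cq by (simp add: add_pos_nonneg)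
    then show ?thesis using cq by (simp add: tan_def field_simps power2_eq_square)
  qed
  ultimately show ?thesis unfolding Gm_def[abs_def] by simp
qed

lemma tan_inj_I: assumes "x \<in> {0<..<pi/2}" "y \<in> {0<..<pi/2}" "tan x = tan y" shows "x = y"
proof -
  have "arctan (tan x) = x" using assms(1) by (intro arctan_tan) auto
  moreover have "arctan (tan y) = y" using assms(2) by (intro arctan_tan) auto
  ultimately show ?thesis using assms(3) by metis
qed

lemma Gm_inj: assumes "c > 0" shows "inj_on (Gm c) {0<..<pi/2}"
proof (rule inj_onI)
  fix x y assume x: "x \<in> {0<..<pi/2}" and y: "y \<in> {0<..<pi/2}" and e: "Gm c x = Gm c y"
  then have "tan (Gm c x) = tan (Gm c y)" by simp
  then have "tan x = tan y" using assms by (simp add: Gm_tan)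
  then show "x = y" using tan_inj_I x y by blast
qed

lemma Gm_image: assumes "c > 0" shows "Gm c ` {0<..<pi/2} = {0<..<pi/2}"
proof
  show "Gm c ` {0<..<pi/2} \<subseteq> {0<..<pi/2}" using Gm_in[OF assms] by blast
  show "{0<..<pi/2} \<subseteq> Gm c ` {0<..<pi/2}"
  proof
    fix p :: real assume p: "p \<in> {0<..<pi/2}"
    define q where "q = arctan (tan p / c)"
    have "q \<in> {0<..<pi/2}" using p assms tan_gt_zero[of p] arctan_ubound[of "tan p / c"] by (auto simp: q_def)
    moreover have "Gm c q = p" using assms p by (simp add: Gm_def q_def tan_arctan arctan_tan)
    ultimately show "p \<in> Gm c ` {0<..<pi/2}" by (metis image_eqI)
  qed
qed

lemma Gm_measurable[measurable]: "Gm c \<in> borel_measurable borel"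
proof -
  have s: "sin \<in> borel_measurable (borel :: real measure)" "cos \<in> borel_measurable (borel :: real measure)"
    by (rule borel_measurable_sin, rule borel_measurable_cos)
  have "(\<lambda>q. c * (sin q / cos q)) \<in> borel_measurable borel"
    by (intro borel_measurable_times borel_measurable_divide borel_measurable_const s)
  then have "(\<lambda>q. arctan (c * (sin q / cos q))) \<in> borel_measurable borel"
    using measurable_compose[OF _ borel_measurable_arctan] by (auto simp: o_def)
  then show ?thesis unfolding Gm_def[abs_def] tan_def .
qed

lemma Gm_measurable_lborel[measurable]: "Gm c \<in> borel_measurable lborel"
  by (simp add: Gm_measurable measurable_lborel1)




lemma den_pos: fixes c q :: real assumes "c > 0" shows "(cos q)\<^sup>2 + c\<^sup>2 * (sin q)\<^sup>2 > 0"
proof (cases "cos q = 0")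
  case True
  then have "(sin q)\<^sup>2 = 1" using sin_cos_squared_add[of q] by simp
  then show ?thesis using True assms by simp
next
  case False
  then show ?thesis using assms by (simp add: add_pos_nonneg)
qed

lemma meas_comp_Gm:
  fixes f :: "real \<Rightarrow> 'b::{banach, second_countable_topology}"
  assumes c: "c > 0" and mf: "set_borel_measurable lborel {0<..<pi/2} f"
    and w: "w \<in> borel_measurable borel"
  shows "set_borel_measurable lborel {0<..<pi/2} (\<lambda>x. w x *\<^sub>R f (Gm c x))"
proof -
  let ?I = "{0<..<pi/2::real}"
  have e: "(\<lambda>x. indicator ?I x *\<^sub>R (w x *\<^sub>R f (Gm c x))) = (\<lambda>x. (indicator ?I x * w x) *\<^sub>R ((\<lambda>y. indicator ?I y *\<^sub>R f y) (Gm c x)))"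
  proof
    fix x show "indicator ?I x *\<^sub>R (w x *\<^sub>R f (Gm c x)) = (indicator ?I x * w x) *\<^sub>R ((\<lambda>y. indicator ?I y *\<^sub>R f y) (Gm c x))"
      using Gm_in[OF c, of x] by (cases "x \<in> ?I") (auto simp: indicator_def)
  qed
  have m1: "(\<lambda>y. indicator ?I y *\<^sub>R f y) \<in> borel_measurable borel"
    using mf unfolding set_borel_measurable_def by simp
  have m2: "(\<lambda>x. (\<lambda>y. indicator ?I y *\<^sub>R f y) (Gm c x)) \<in> borel_measurable borel"
    using measurable_compose[OF Gm_measurable m1] by (simp add: o_def)
  have m3: "(\<lambda>x. indicator ?I x * w x) \<in> borel_measurable borel"
    using w by (intro borel_measurable_times) auto
  show ?thesis unfolding set_borel_measurable_def e
    using borel_measurable_scaleR[OF m3 m2] by simp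
qed

lemma cont_w_meas: "(\<lambda>q::real. (c::real) / ((cos q)\<^sup>2 + c\<^sup>2 * (sin q)\<^sup>2)) \<in> borel_measurable borel"
  by measurable

lemma cov_G:
  fixes f :: "real \<Rightarrow> complex"
  assumes c: "c > 0" and mf: "set_borel_measurable lborel {0<..<pi/2} f"
  shows "(set_integrable lborel {0<..<pi/2} f \<longleftrightarrow>
          set_integrable lborel {0<..<pi/2} (\<lambda>q. (c / ((cos q)\<^sup>2 + c\<^sup>2 * (sin q)\<^sup>2)) *\<^sub>R f (Gm c q))) \<and>
         (LINT p:{0<..<pi/2}|lborel. f p) = (LINT q:{0<..<pi/2}|lborel. (c / ((cos q)\<^sup>2 + c\<^sup>2 * (sin q)\<^sup>2)) *\<^sub>R f (Gm c q))"
proof -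
  let ?g' = "\<lambda>q. c / ((cos q)\<^sup>2 + c\<^sup>2 * (sin q)\<^sup>2)"
  have ab: "\<And>x. \<bar>?g' x\<bar> = ?g' x" using den_pos[OF c] c by (simp add: abs_of_pos)
  have der: "\<And>x. x \<in> {0<..<pi/2} \<Longrightarrow> (Gm c has_field_derivative ?g' x) (at x within {0<..<pi/2})"
    using Gm_deriv by (blast intro: has_field_derivative_at_within)
  have mh: "set_borel_measurable lborel {0<..<pi/2} (\<lambda>x. \<bar>?g' x\<bar> *\<^sub>R f (Gm c x))"
    unfolding ab by (rule meas_comp_Gm[OF c mf cont_w_meas])
  show ?thesis using cov_complex[OF _ Gm_image[OF c] der Gm_inj[OF c] mf mh] unfolding ab by simp
qed

lemma cov_G_real:
  fixes f :: "real \<Rightarrow> real"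
  assumes c: "c > 0" and mf: "set_borel_measurable lborel {0<..<pi/2} f"
  shows "(set_integrable lborel {0<..<pi/2} f \<longleftrightarrow>
          set_integrable lborel {0<..<pi/2} (\<lambda>q. (c / ((cos q)\<^sup>2 + c\<^sup>2 * (sin q)\<^sup>2)) * f (Gm c q))) \<and>
         (LINT p:{0<..<pi/2}|lborel. f p) = (LINT q:{0<..<pi/2}|lborel. (c / ((cos q)\<^sup>2 + c\<^sup>2 * (sin q)\<^sup>2)) * f (Gm c q))"
proof -
  let ?g' = "\<lambda>q. c / ((cos q)\<^sup>2 + c\<^sup>2 * (sin q)\<^sup>2)"
  have ab: "\<And>x. \<bar>?g' x\<bar> = ?g' x" using den_pos[OF c] c by (simp add: abs_of_pos)
  have der: "\<And>x. x \<in> {0<..<pi/2} \<Longrightarrow> (Gm c has_field_derivative ?g' x) (at x within {0<..<pi/2})"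
    using Gm_deriv by (blast intro: has_field_derivative_at_within)
  have mh: "set_borel_measurable lborel {0<..<pi/2} (\<lambda>x. \<bar>?g' x\<bar> * f (Gm c x))"
    unfolding ab using meas_comp_Gm[OF c mf cont_w_meas] by simp
  show ?thesis using cov_real[OF _ Gm_image[OF c] der Gm_inj[OF c] mf mh] unfolding ab by simp
qed




definition F2 :: "(real \<times> real \<Rightarrow> complex) \<Rightarrow> real \<Rightarrow> real \<Rightarrow> real \<Rightarrow> complex" where
  "F2 R l t q = (1 / (sqrt (1 - l * (cos t)\<^sup>2 * (sin q)\<^sup>2) * sqrt (1 - l * (cos q)\<^sup>2 - l * (cos t)\<^sup>2 * (sin q)\<^sup>2)))
      *\<^sub>R R (cos t, sqrt (1 - l * (cos t)\<^sup>2) * tan q)"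

lemma alg1_aux: fixes a b c :: real assumes "a > 0" "b > 0" "c > 0"
  shows "c / (a * a) * (1 / ((b / a) * c)) = 1 / (a * b)"
  using assms by (simp add: field_simps)

lemma alg1:
  fixes A B c :: real assumes "A > 0" "B > 0" "c > 0"
  shows "c / A * (1 / (sqrt (B / A) * c)) = 1 / (sqrt A * sqrt B)"
proof -
  have e: "A = sqrt A * sqrt A" using assms by simp
  have "sqrt (B / A) = sqrt B / sqrt A" by (simp add: real_sqrt_divide)
  then show ?thesis using alg1_aux[of "sqrt A" "sqrt B" c] assms e by (metis real_sqrt_gt_zero)
qed

lemma alg2_aux: fixes a b e :: real assumes "a > 0" "b > 0" "e > 0"
  shows "b / (a * a) * (1 / ((b / a) * (e / a))) = 1 / e"
  using assms by (simp add: field_simps)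

lemma alg2:
  fixes D K E :: real assumes "D > 0" "K > 0" "E > 0"
  shows "sqrt K / D * (1 / (sqrt (K / D) * sqrt (E / D))) = 1 / sqrt E"
proof -
  have e: "D = sqrt D * sqrt D" using assms by simp
  have "sqrt (K / D) = sqrt K / sqrt D" "sqrt (E / D) = sqrt E / sqrt D" by (simp_all add: real_sqrt_divide)
  then show ?thesis using alg2_aux[of "sqrt D" "sqrt K" "sqrt E"] assms e by (metis real_sqrt_gt_zero)
qed




lemma pos_facts:
  fixes l x y :: real
  assumes "0 < l" "l < 1" "0 \<le> x" "x \<le> 1" "0 \<le> y" "y \<le> 1"
  shows "l * x * y \<le> l" "l * x * y \<le> l * y" "l * x \<le> l"
proof -
  have "x * y \<le> y" using assms by (simp add: mult_left_le_one_le)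
  then show "l * x * y \<le> l * y" using assms by (simp add: mult.assoc)
  moreover have "l * y \<le> l" using assms by (simp add: mult_left_le)
  ultimately show "l * x * y \<le> l" by linarith
  show "l * x \<le> l" using assms by (simp add: mult_left_le)
qed

lemma sq_bounds: fixes a :: real shows "0 \<le> (cos a)\<^sup>2" "(cos a)\<^sup>2 \<le> 1" "0 \<le> (sin a)\<^sup>2" "(sin a)\<^sup>2 \<le> 1"
  by (simp_all add: abs_square_le_1)

lemma stepA_eq:
  fixes l t q :: real
  assumes l: "0 < l" "l < 1" and t: "t \<in> {0<..<pi/2}" and q: "q \<in> {0<..<pi/2}"
  defines "c \<equiv> sqrt (1 - l * (cos t)\<^sup>2)"
  shows "(c / ((cos q)\<^sup>2 + c\<^sup>2 * (sin q)\<^sup>2)) *\<^sub>R lhs_integrand R l t (Gm c q) = F2 R l t q"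
proof -
  define x where "x = (cos t)\<^sup>2"
  define y where "y = (sin q)\<^sup>2"
  define z where "z = (cos q)\<^sup>2"
  have yz: "z = 1 - y" unfolding y_def z_def by (simp add: cos_squared_eq)
  have xb: "0 \<le> x" "x \<le> 1" "0 \<le> y" "y \<le> 1" unfolding x_def y_def using sq_bounds by auto
  note pf = pos_facts[OF l xb]
  have lx: "l * (cos t)\<^sup>2 < 1" using pf(3) l unfolding x_def by linarith
  have c2: "c\<^sup>2 = 1 - l * x" unfolding c_def x_def using lx by simp
  have cpos: "c > 0" unfolding c_def using lx by simp
  define A where "A = 1 - l * x * y"
  define B where "B = 1 - l * z - l * x * y"
  have Apos: "A > 0" unfolding A_def using pf l by linarith
  have Bpos: "B > 0"
  proof -
    have "B = 1 - l + (l * y - l * x * y)" unfolding B_def yz by (simp add: algebra_simps)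
    then show ?thesis using pf(2) l by linarith
  qed
  have den: "(cos q)\<^sup>2 + c\<^sup>2 * (sin q)\<^sup>2 = A"
    unfolding A_def c2 using yz by (simp add: z_def[symmetric] y_def[symmetric] algebra_simps)
  have cosG: "(cos (Gm c q))\<^sup>2 = z / A"
    using Gm_cos[OF q, of c] den Apos by (simp add: power_divide z_def)
  have e1: "1 - l * (cos (Gm c q))\<^sup>2 = B / A"
    unfolding cosG B_def A_def using Apos by (simp add: A_def field_simps)
  have e2: "sqrt (1 - l * (cos t)\<^sup>2) = c" unfolding c_def ..
  have sc: "c / ((cos q)\<^sup>2 + c\<^sup>2 * (sin q)\<^sup>2) * (1 / (sqrt (1 - l * (cos (Gm c q))\<^sup>2) * sqrt (1 - l * (cos t)\<^sup>2)))
     = 1 / (sqrt (1 - l * (cos t)\<^sup>2 * (sin q)\<^sup>2) * sqrt (1 - l * (cos q)\<^sup>2 - l * (cos t)\<^sup>2 * (sin q)\<^sup>2))"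
    unfolding den e1 e2 using alg1[OF Apos Bpos cpos] by (simp add: A_def B_def x_def y_def z_def)
  show ?thesis unfolding lhs_integrand_def F2_def Gm_tan scaleR_scaleR e2 using sc[unfolded e2] by simp
qed





lemma aux1: fixes l a y D :: real assumes "D = 1 - l * a * y" "D \<noteq> 0"
  shows "1 - l * ((1 - a) / D) * y = (1 - l * y) / D"
  using assms(2) by (simp add: field_simps) (simp add: assms(1) algebra_simps)

lemma aux2: fixes l a y D :: real assumes "D = 1 - l * a * y" "D \<noteq> 0"
  shows "1 - l * (1 - y) - l * ((1 - a) / D) * y = (1 - l + l\<^sup>2 * a * y * (1 - y)) / D"
  using assms(2) by (simp add: field_simps) (simp add: assms(1) algebra_simps power2_eq_square)

lemma aux3: fixes l a y D :: real assumes "D = 1 - l * a * y" "D \<noteq> 0"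
  shows "1 - l * ((1 - a) / D) = (1 - l * (1 - a * (1 - y))) / D"
  using assms(2) by (simp add: field_simps) (simp add: assms(1) algebra_simps)

lemma stepC_eq:
  fixes l s q :: real
  assumes l: "0 < l" "l < 1" and s: "s \<in> {0<..<pi/2}" and q: "q \<in> {0<..<pi/2}"
  defines "d \<equiv> sqrt (1 - l * (sin q)\<^sup>2)"
  shows "(d / ((cos s)\<^sup>2 + d\<^sup>2 * (sin s)\<^sup>2)) *\<^sub>R F2 R l (Gm d s) q = mid_integrand R l s q"
proof -
  define a where "a = (sin s)\<^sup>2"
  define b where "b = (cos s)\<^sup>2"
  define y where "y = (sin q)\<^sup>2"
  define z where "z = (cos q)\<^sup>2"
  have ab: "b = 1 - a" unfolding a_def b_def by (simp add: cos_squared_eq)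
  have yz: "z = 1 - y" unfolding y_def z_def by (simp add: cos_squared_eq)
  have xb: "0 \<le> a" "a \<le> 1" "0 \<le> y" "y \<le> 1" unfolding a_def y_def using sq_bounds by auto
  have zb: "0 \<le> z" unfolding z_def by simp
  note pf = pos_facts[OF l xb]
  have "l * y \<le> l" using l xb by (simp add: mult_left_le)
  then have ly: "l * y < 1" using l by linarith
  have d2: "d\<^sup>2 = 1 - l * y" unfolding d_def y_def using ly by (simp add: y_def)
  define D where "D = 1 - l * a * y"
  define K where "K = 1 - l * y"
  define E where "E = 1 - l + l\<^sup>2 * a * y * z"
  define N where "N = 1 - l * (1 - a * z)"
  have Dpos: "D > 0" unfolding D_def using pf l by linarith
  have Kpos: "K > 0" unfolding K_def using ly by simp
  have "0 \<le> l\<^sup>2 * a * y * z" using xb zb by simp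
  then have Epos: "E > 0" unfolding E_def using l by linarith
  have dK: "d = sqrt K" unfolding d_def K_def y_def ..
  have den: "(cos s)\<^sup>2 + d\<^sup>2 * (sin s)\<^sup>2 = D"
    unfolding D_def d2 b_def[symmetric] a_def[symmetric] ab by (simp add: algebra_simps)
  have den': "1 - l * (sin s)\<^sup>2 * (sin q)\<^sup>2 = D" unfolding D_def a_def y_def ..
  have cosG: "cos (Gm d s) = cos s / sqrt (1 - l * (sin s)\<^sup>2 * (sin q)\<^sup>2)"
    using Gm_cos[OF s, of d] den den' by simp
  have cosG2: "(cos (Gm d s))\<^sup>2 = b / D"
    using cosG den' Dpos by (simp add: power_divide b_def)
  have Dne: "D \<noteq> 0" using Dpos by simp
  have e1: "1 - l * (cos (Gm d s))\<^sup>2 * (sin q)\<^sup>2 = K / D"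
    unfolding cosG2 y_def[symmetric] ab K_def using aux1[OF D_def Dne] .
  have e2: "1 - l * (cos q)\<^sup>2 - l * (cos (Gm d s))\<^sup>2 * (sin q)\<^sup>2 = E / D"
    unfolding cosG2 y_def[symmetric] z_def[symmetric] ab E_def yz using aux2[OF D_def Dne] .
  have e3: "1 - l * (cos (Gm d s))\<^sup>2 = N / D"
    unfolding cosG2 ab N_def yz using aux3[OF D_def Dne] .
  have e4: "(1 - l * (1 - (sin s)\<^sup>2 * (cos q)\<^sup>2)) / (1 - l * (sin s)\<^sup>2 * (sin q)\<^sup>2) = N / D"
    unfolding den' N_def a_def z_def ..
  have e5: "1 - l + l\<^sup>2 * (sin s)\<^sup>2 * (sin q)\<^sup>2 * (cos q)\<^sup>2 = E" unfolding E_def a_def y_def z_def ..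
  have sc: "d / ((cos s)\<^sup>2 + d\<^sup>2 * (sin s)\<^sup>2) *
      (1 / (sqrt (1 - l * (cos (Gm d s))\<^sup>2 * (sin q)\<^sup>2) * sqrt (1 - l * (cos q)\<^sup>2 - l * (cos (Gm d s))\<^sup>2 * (sin q)\<^sup>2)))
      = 1 / sqrt (1 - l + l\<^sup>2 * (sin s)\<^sup>2 * (sin q)\<^sup>2 * (cos q)\<^sup>2)"
    unfolding den e1 e2 e5 unfolding dK using alg2[OF Dpos Kpos Epos] .
  show ?thesis unfolding F2_def mid_integrand_def scaleR_scaleR unfolding sc unfolding e3 e4 unfolding cosG ..
qed




lemma set_fubini_swap:
  fixes f :: "real \<Rightarrow> real \<Rightarrow> complex"
  assumes "set_integrable (lborel \<Otimes>\<^sub>M lborel) (A \<times> B) (\<lambda>z. f (fst z) (snd z))"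
  shows "(LINT x:A|lborel. LINT y:B|lborel. f x y) = (LINT y:B|lborel. LINT x:A|lborel. f x y)"
proof -
  define F where "F x y = (indicator A x * indicator B y) *\<^sub>R f x y" for x y
  have e: "(\<lambda>z. indicator (A \<times> B) z *\<^sub>R f (fst z) (snd z)) = case_prod F"
    by (auto simp: F_def indicator_times split_beta')
  have int: "integrable (lborel \<Otimes>\<^sub>M lborel) (case_prod F)"
    using assms unfolding set_integrable_def e .
  have l: "(LINT x:A|lborel. LINT y:B|lborel. f x y) = (\<integral>x. (\<integral>y. F x y \<partial>lborel) \<partial>lborel)"
    unfolding set_lebesgue_integral_def F_def
    by (simp add: scaleR_scaleR[symmetric] del: scaleR_scaleR)
  have r: "(LINT y:B|lborel. LINT x:A|lborel. f x y) = (\<integral>y. (\<integral>x. F x y \<partial>lborel) \<partial>lborel)"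
  proof -
    have "\<And>x y. F x y = indicator B y *\<^sub>R (indicator A x *\<^sub>R f x y)" by (simp add: F_def mult.commute)
    then show ?thesis unfolding set_lebesgue_integral_def by (simp only: integral_scaleR_right)
  qed
  show ?thesis unfolding l r using lborel_pair.Fubini_integral[OF int] by simp
qed

lemma set_meas_sec1:
  fixes f :: "real \<Rightarrow> real \<Rightarrow> 'b::{banach, second_countable_topology}"
  assumes "set_borel_measurable (lborel \<Otimes>\<^sub>M lborel) (A \<times> B) (\<lambda>z. f (fst z) (snd z))" and "x \<in> A"
  shows "set_borel_measurable lborel B (f x)"
proof -
  have "(\<lambda>y. (\<lambda>z. indicator (A \<times> B) z *\<^sub>R f (fst z) (snd z)) (x, y)) \<in> borel_measurable lborel"
    using assms(1) unfolding set_borel_measurable_def by (rule measurable_Pair2) simp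
  then show ?thesis using assms(2) unfolding set_borel_measurable_def by (simp add: indicator_times)
qed

lemma set_meas_sec2:
  fixes f :: "real \<Rightarrow> real \<Rightarrow> 'b::{banach, second_countable_topology}"
  assumes "set_borel_measurable (lborel \<Otimes>\<^sub>M lborel) (A \<times> B) (\<lambda>z. f (fst z) (snd z))" and "y \<in> B"
  shows "set_borel_measurable lborel A (\<lambda>x. f x y)"
proof -
  have "(\<lambda>x. (\<lambda>z. indicator (A \<times> B) z *\<^sub>R f (fst z) (snd z)) (x, y)) \<in> borel_measurable lborel"
    using assms(1) unfolding set_borel_measurable_def by (rule measurable_Pair1) simp
  then show ?thesis using assms(2) unfolding set_borel_measurable_def by (simp add: indicator_times)
qed

lemma set_integrable_meas:
  assumes "set_integrable M A f" shows "set_borel_measurable M A f"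
  using assms unfolding set_integrable_def set_borel_measurable_def by (rule borel_measurable_integrable)




lemma set_integrable_norm_iff':
  fixes h :: "real \<Rightarrow> complex"
  assumes "set_borel_measurable M B h"
  shows "set_integrable M B (\<lambda>y. norm (h y)) \<longleftrightarrow> set_integrable M B h"
proof -
  have e: "(\<lambda>y. indicat_real B y *\<^sub>R norm (h y)) = (\<lambda>y. norm (indicat_real B y *\<^sub>R h y))"
    by (auto simp: indicator_def)
  show ?thesis using assms unfolding set_integrable_def set_borel_measurable_def e
    by (rule integrable_norm_iff)
qed

lemma norm_sec:
  fixes h :: "real \<Rightarrow> real \<Rightarrow> complex"
  shows "(\<integral>y. norm (indicator (A \<times> B) (x, y) *\<^sub>R h x y) \<partial>lborel) = indicator A x * (LINT y:B|lborel. norm (h x y))"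
proof -
  have "\<And>y. norm (indicator (A \<times> B) (x, y) *\<^sub>R h x y) = indicator A x * (indicator B y *\<^sub>R norm (h x y))"
    by (auto simp: indicator_def)
  then have "(\<integral>y. norm (indicator (A \<times> B) (x, y) *\<^sub>R h x y) \<partial>lborel) = (\<integral>y. indicator A x * (indicator B y *\<^sub>R norm (h x y)) \<partial>lborel)"
    by presburger
  also have "\<dots> = indicator A x * (\<integral>y. indicator B y *\<^sub>R norm (h x y) \<partial>lborel)"
    by (rule integral_mult_right_zero)
  finally show ?thesis unfolding set_lebesgue_integral_def .
qed

lemma transfer_int:
  fixes f g :: "real \<Rightarrow> real \<Rightarrow> complex"
  assumes int: "set_integrable (lborel \<Otimes>\<^sub>M lborel) (A \<times> B) (\<lambda>z. f (fst z) (snd z))"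
    and meas: "set_borel_measurable (lborel \<Otimes>\<^sub>M lborel) (A \<times> B) (\<lambda>z. g (fst z) (snd z))"
    and sec: "\<And>x. x \<in> A \<Longrightarrow> (set_integrable lborel B (\<lambda>y. norm (f x y)) \<longleftrightarrow> set_integrable lborel B (\<lambda>y. norm (g x y)))
                \<and> (LINT y:B|lborel. norm (f x y)) = (LINT y:B|lborel. norm (g x y))"
  shows "set_integrable (lborel \<Otimes>\<^sub>M lborel) (A \<times> B) (\<lambda>z. g (fst z) (snd z))"
proof -
  let ?F = "\<lambda>z. indicator (A \<times> B) z *\<^sub>R f (fst z) (snd z)"
  let ?G = "\<lambda>z. indicator (A \<times> B) z *\<^sub>R g (fst z) (snd z)"
  have intF: "integrable (lborel \<Otimes>\<^sub>M lborel) ?F" using int unfolding set_integrable_def .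
  have measF: "set_borel_measurable (lborel \<Otimes>\<^sub>M lborel) (A \<times> B) (\<lambda>z. f (fst z) (snd z))"
    by (rule set_integrable_meas[OF int])
  have mG: "?G \<in> borel_measurable (lborel \<Otimes>\<^sub>M lborel)" using meas unfolding set_borel_measurable_def .
  have eqn: "(\<lambda>x. \<integral>y. norm (?G (x, y)) \<partial>lborel) = (\<lambda>x. \<integral>y. norm (?F (x, y)) \<partial>lborel)"
  proof
    fix x
    show "(\<integral>y. norm (?G (x, y)) \<partial>lborel) = (\<integral>y. norm (?F (x, y)) \<partial>lborel)"
      using norm_sec[of A B x g] norm_sec[of A B x f] sec[of x] by (cases "x \<in> A") auto
  qed
  have i1: "integrable lborel (\<lambda>x. \<integral>y. norm (?G (x, y)) \<partial>lborel)"
    unfolding eqn using lborel_pair.integrable_fst'[OF integrable_norm[OF intF]] by simp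
  have i2: "AE x in lborel. integrable lborel (\<lambda>y. ?G (x, y))"
    using lborel_pair.AE_integrable_fst'[OF intF]
  proof (rule eventually_mono)
    fix x assume a: "integrable lborel (\<lambda>y. ?F (x, y))"
    show "integrable lborel (\<lambda>y. ?G (x, y))"
    proof (cases "x \<in> A")
      case True
      have "set_integrable lborel B (f x)"
        using a True unfolding set_integrable_def by (simp add: indicator_times)
      then have "set_integrable lborel B (\<lambda>y. norm (f x y))"
        using set_integrable_norm_iff'[OF set_meas_sec1[OF measF True]] by simp
      then have "set_integrable lborel B (\<lambda>y. norm (g x y))" using sec[OF True] by simp
      then have "set_integrable lborel B (g x)"
        using set_integrable_norm_iff'[OF set_meas_sec1[OF meas True]] by simp
      then show ?thesis using True unfolding set_integrable_def by (simp add: indicator_times)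
    next
      case False
      then show ?thesis by (simp add: indicator_times)
    qed
  qed
  show ?thesis unfolding set_integrable_def
    by (rule lborel_pair.Fubini_integrable[OF mG i1 i2])
qed




lemma set_fubini_prod:
  fixes f :: "real \<Rightarrow> real \<Rightarrow> complex"
  assumes "set_integrable (lborel \<Otimes>\<^sub>M lborel) (A \<times> B) (\<lambda>z. f (fst z) (snd z))"
  shows "(LINT z:A \<times> B|lborel \<Otimes>\<^sub>M lborel. f (fst z) (snd z)) = (LINT x:A|lborel. LINT y:B|lborel. f x y)"
proof -
  have int: "integrable (lborel \<Otimes>\<^sub>M lborel) (\<lambda>z. indicator (A \<times> B) z *\<^sub>R f (fst z) (snd z))"
    using assms unfolding set_integrable_def .
  have l: "(LINT x:A|lborel. LINT y:B|lborel. f x y) = (\<integral>x. (\<integral>y. indicator (A \<times> B) (x, y) *\<^sub>R f x y \<partial>lborel) \<partial>lborel)"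
  proof -
    have "\<And>x y. indicator (A \<times> B) (x, y) *\<^sub>R f x y = indicator A x *\<^sub>R (indicator B y *\<^sub>R f x y)"
      by (simp add: indicator_times)
    then show ?thesis unfolding set_lebesgue_integral_def by (simp only: integral_scaleR_right)
  qed
  show ?thesis unfolding l using lborel_pair.integral_fst'[OF int] by (simp add: set_lebesgue_integral_def)
qed

lemma F2_meas:
  assumes meas: "set_borel_measurable borel ({0..1} \<times> {0..}) R"
    and l: "0 < l" "l < 1"
  shows "set_borel_measurable (lborel \<Otimes>\<^sub>M lborel) ({0<..<pi/2} \<times> {0<..<pi/2}) (\<lambda>z. F2 R l (fst z) (snd z))"
proof -
  let ?D = "{0..1::real} \<times> {0::real..}"
  let ?S = "{0<..<pi/2::real} \<times> {0<..<pi/2::real}"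
  define R' where "R' x = indicator ?D x *\<^sub>R R x" for x
  define \<phi> where "\<phi> z = (cos (fst z), sqrt (1 - l * (cos (fst z))\<^sup>2) * tan (snd z))" for z :: "real \<times> real"
  define w where "w z = 1 / (sqrt (1 - l * (cos (fst z))\<^sup>2 * (sin (snd z))\<^sup>2) * sqrt (1 - l * (cos (snd z))\<^sup>2 - l * (cos (fst z))\<^sup>2 * (sin (snd z))\<^sup>2))" for z :: "real \<times> real"
  have mR: "R' \<in> borel_measurable borel" using meas unfolding set_borel_measurable_def R'_def[abs_def] .
  have mphi: "\<phi> \<in> borel_measurable (borel \<Otimes>\<^sub>M borel)" unfolding \<phi>_def[abs_def] tan_def by measurable
  have mw: "w \<in> borel_measurable (borel \<Otimes>\<^sub>M borel)" unfolding w_def[abs_def] by measurable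
  have mS: "(\<lambda>z. indicator ?S z * w z) \<in> borel_measurable (borel \<Otimes>\<^sub>M borel)"
    using mw by measurable
  have e: "(\<lambda>z. indicator ?S z *\<^sub>R F2 R l (fst z) (snd z)) = (\<lambda>z. (indicator ?S z * w z) *\<^sub>R R' (\<phi> z))"
  proof
    fix z :: "real \<times> real"
    show "indicator ?S z *\<^sub>R F2 R l (fst z) (snd z) = (indicator ?S z * w z) *\<^sub>R R' (\<phi> z)"
    proof (cases "z \<in> ?S")
      case True
      then have t: "fst z \<in> {0<..<pi/2}" and q: "snd z \<in> {0<..<pi/2}" by (auto simp: mem_Times_iff)
      have c1: "0 < cos (fst z)" using t by (auto intro!: cos_gt_zero_pi)
      have tq: "0 < tan (snd z)" using q by (auto intro!: tan_gt_zero)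
      have "l * (cos (fst z))\<^sup>2 \<le> l" by (rule mult_left_le) (use l sq_bounds(2)[of "fst z"] in auto)
      then have "0 \<le> 1 - l * (cos (fst z))\<^sup>2" using l by linarith
      then have "0 \<le> sqrt (1 - l * (cos (fst z))\<^sup>2)" by (rule real_sqrt_ge_zero)
      then have "0 \<le> sqrt (1 - l * (cos (fst z))\<^sup>2) * tan (snd z)" using tq by simp
      then have "\<phi> z \<in> ?D" using c1 cos_le_one[of "fst z"] unfolding \<phi>_def by auto
      then show ?thesis using True unfolding R'_def F2_def w_def \<phi>_def by simp
    next
      case False
      then show ?thesis by simp
    qed
  qed
  have "(\<lambda>z. (indicator ?S z * w z) *\<^sub>R R' (\<phi> z)) \<in> borel_measurable (borel \<Otimes>\<^sub>M borel)"
    using borel_measurable_scaleR[OF mS measurable_compose[OF mphi mR]] by (simp add: o_def)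
  moreover have "measurable (lborel \<Otimes>\<^sub>M lborel) (borel :: complex measure) = measurable (borel \<Otimes>\<^sub>M borel) borel"
    by (rule measurable_cong_sets) (auto intro: sets_pair_measure_cong)
  ultimately show ?thesis unfolding set_borel_measurable_def e by simp
qed




lemma octant_eq:
  assumes l: "0 < l" "l < 1" and z: "z \<in> {0<..<pi/2} \<times> {0<..<pi/2}"
  shows "octant_surface_integrand (rhs_integrand R l) z = mid_integrand R l (fst z) (snd z)"
proof -
  obtain t p where tp: "z = (t, p)" by (cases z)
  have t: "t \<in> {0<..<pi/2}" and p: "p \<in> {0<..<pi/2}" using z tp by auto
  have st: "sin t > 0" using t by (auto intro!: sin_gt_zero)
  have cp: "cos p > 0" using p by (auto intro!: cos_gt_zero_pi)
  define E where "E = 1 - l + l\<^sup>2 * (sin t)\<^sup>2 * (sin p)\<^sup>2 * (cos p)\<^sup>2"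
  have inner: "(1 - l) * (1 - (cos t)\<^sup>2) + l\<^sup>2 * (sin t * sin p)\<^sup>2 * (sin t * cos p)\<^sup>2 = (sin t)\<^sup>2 * E"
    unfolding E_def by (simp add: sin_squared_eq[symmetric] power_mult_distrib algebra_simps)
  have "0 \<le> l\<^sup>2 * (sin t)\<^sup>2 * (sin p)\<^sup>2 * (cos p)\<^sup>2" by simp
  then have Epos: "E > 0" unfolding E_def using l by linarith
  have sq: "sqrt ((sin t)\<^sup>2 * E) = sin t * sqrt E" using st by (simp add: real_sqrt_mult)
  have sc: "sin t * (1 / sqrt ((1 - l) * (1 - (cos t)\<^sup>2) + l\<^sup>2 * (sin t * sin p)\<^sup>2 * (sin t * cos p)\<^sup>2))
      = 1 / sqrt (1 - l + l\<^sup>2 * (sin t)\<^sup>2 * (sin p)\<^sup>2 * (cos p)\<^sup>2)"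
    unfolding inner sq E_def[symmetric] using st Epos by simp
  have a1: "1 - l * (sin t * sin p)\<^sup>2 = 1 - l * (sin t)\<^sup>2 * (sin p)\<^sup>2" by (simp add: power_mult_distrib)
  have a2: "1 - l * (1 - (sin t * cos p)\<^sup>2) = 1 - l * (1 - (sin t)\<^sup>2 * (cos p)\<^sup>2)" by (simp add: power_mult_distrib)
  have a3: "sin t * sin p / (sin t * cos p) = tan p" using st by (simp add: tan_def)
  show ?thesis unfolding tp octant_surface_integrand_def octant_param_def rhs_integrand_def mid_integrand_def
    by (simp only: fst_conv snd_conv prod.case a1 a2 a3 scaleR_scaleR sc)
qed




lemma set_meas_norm:
  fixes f :: "real \<Rightarrow> complex"
  assumes "set_borel_measurable lborel A f"
  shows "set_borel_measurable lborel A (\<lambda>x. norm (f x))"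
proof -
  have e: "(\<lambda>x. indicat_real A x *\<^sub>R norm (f x)) = (\<lambda>x. norm (indicat_real A x *\<^sub>R f x))"
    by (auto simp: indicator_def)
  show ?thesis using measurable_compose[OF assms[unfolded set_borel_measurable_def] borel_measurable_norm]
    unfolding set_borel_measurable_def e by (simp add: o_def)
qed

lemma lc_pos: fixes l x :: real assumes "0 < l" "l < 1" "x \<le> 1" "0 \<le> x" shows "sqrt (1 - l * x) > 0"
proof -
  have "l * x \<le> l" by (rule mult_left_le) (use assms in auto)
  then have "l * x < 1" using assms by linarith
  then show ?thesis by simp
qed

theorem lemma3p4:
  fixes R :: "real \<times> real \<Rightarrow> complex" and l :: real
  assumes meas: "set_borel_measurable borel ({0..1} \<times> {0..}) R"
    and l: "0 < l" "l < 1"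
    and int1: "set_integrable (lborel \<Otimes>\<^sub>M lborel) octant_square
                 (\<lambda>q. lhs_integrand R l (fst q) (snd q))"
    and int2: "set_integrable (lborel \<Otimes>\<^sub>M lborel) octant_square
                 (\<lambda>q. mid_integrand R l (fst q) (snd q))"
    and int3: "set_integrable (lborel \<Otimes>\<^sub>M lborel) octant_square
                 (octant_surface_integrand (rhs_integrand R l))"
  shows "((LINT t:{0<..<pi/2}|lborel. (LINT p:{0<..<pi/2}|lborel. lhs_integrand R l t p))
           = (LINT t:{0<..<pi/2}|lborel. (LINT p:{0<..<pi/2}|lborel. mid_integrand R l t p)) \<and>
         (LINT t:{0<..<pi/2}|lborel. (LINT p:{0<..<pi/2}|lborel. mid_integrand R l t p))
           = octant_surface_integral (rhs_integrand R l))"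
proof -
  let ?I = "{0<..<pi/2::real}"
  have int1': "set_integrable (lborel \<Otimes>\<^sub>M lborel) (?I \<times> ?I) (\<lambda>z. lhs_integrand R l (fst z) (snd z))"
    using int1 unfolding octant_square_def .
  have int2': "set_integrable (lborel \<Otimes>\<^sub>M lborel) (?I \<times> ?I) (\<lambda>z. mid_integrand R l (fst z) (snd z))"
    using int2 unfolding octant_square_def .
  note mF1 = set_integrable_meas[OF int1']
  note mF2 = F2_meas[OF meas l]
  define cc where "cc t = sqrt (1 - l * (cos t)\<^sup>2)" for t
  have cpos: "cc t > 0" for t unfolding cc_def by (rule lc_pos[OF l]) (simp_all add: sq_bounds)
  have Aeq: "(cc t / ((cos q)\<^sup>2 + (cc t)\<^sup>2 * (sin q)\<^sup>2)) *\<^sub>R lhs_integrand R l t (Gm (cc t) q) = F2 R l t q"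
    if "t \<in> ?I" "q \<in> ?I" for t q
    using stepA_eq[OF l that] unfolding cc_def .
  have A: "(LINT p:?I|lborel. lhs_integrand R l t p) = (LINT q:?I|lborel. F2 R l t q)" if t: "t \<in> ?I" for t
  proof -
    have m: "set_borel_measurable lborel ?I (lhs_integrand R l t)" by (rule set_meas_sec1[OF mF1 t])
    have "(LINT p:?I|lborel. lhs_integrand R l t p) = (LINT q:?I|lborel. (cc t / ((cos q)\<^sup>2 + (cc t)\<^sup>2 * (sin q)\<^sup>2)) *\<^sub>R lhs_integrand R l t (Gm (cc t) q))"
      using cov_G[OF cpos m] by blast
    also have "\<dots> = (LINT q:?I|lborel. F2 R l t q)"
      by (rule set_lebesgue_integral_cong) (use Aeq t in auto)
    finally show ?thesis .
  qed
  have AN: "(set_integrable lborel ?I (\<lambda>p. norm (lhs_integrand R l t p)) \<longleftrightarrow> set_integrable lborel ?I (\<lambda>q. norm (F2 R l t q)))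
     \<and> (LINT p:?I|lborel. norm (lhs_integrand R l t p)) = (LINT q:?I|lborel. norm (F2 R l t q))" if t: "t \<in> ?I" for t
  proof -
    have m: "set_borel_measurable lborel ?I (\<lambda>p. norm (lhs_integrand R l t p))"
      by (rule set_meas_norm[OF set_meas_sec1[OF mF1 t]])
    have pw: "(cc t / ((cos q)\<^sup>2 + (cc t)\<^sup>2 * (sin q)\<^sup>2)) * norm (lhs_integrand R l t (Gm (cc t) q)) = norm (F2 R l t q)"
      if q: "q \<in> ?I" for q
    proof -
      have "cc t / ((cos q)\<^sup>2 + (cc t)\<^sup>2 * (sin q)\<^sup>2) > 0" using cpos[of t] den_pos[OF cpos[of t], of q] by simp
      then show ?thesis unfolding Aeq[OF t q, symmetric] using cpos[of t] by (simp add: abs_of_pos)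
    qed
    note cv = cov_G_real[OF cpos m]
    have i: "set_integrable lborel ?I (\<lambda>q. (cc t / ((cos q)\<^sup>2 + (cc t)\<^sup>2 * (sin q)\<^sup>2)) * norm (lhs_integrand R l t (Gm (cc t) q)))
       \<longleftrightarrow> set_integrable lborel ?I (\<lambda>q. norm (F2 R l t q))"
      by (rule set_integrable_cong) (use pw in auto)
    have e: "(LINT q:?I|lborel. (cc t / ((cos q)\<^sup>2 + (cc t)\<^sup>2 * (sin q)\<^sup>2)) * norm (lhs_integrand R l t (Gm (cc t) q)))
       = (LINT q:?I|lborel. norm (F2 R l t q))"
      by (rule set_lebesgue_integral_cong) (use pw in auto)
    show ?thesis using cv i e by simp
  qed
  have intF2: "set_integrable (lborel \<Otimes>\<^sub>M lborel) (?I \<times> ?I) (\<lambda>z. F2 R l (fst z) (snd z))"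
    by (rule transfer_int[OF int1' mF2 AN])
  define dd where "dd q = sqrt (1 - l * (sin q)\<^sup>2)" for q
  have dpos: "dd q > 0" for q unfolding dd_def by (rule lc_pos[OF l]) (simp_all add: sq_bounds)
  have C: "(LINT t:?I|lborel. F2 R l t q) = (LINT s:?I|lborel. mid_integrand R l s q)" if q: "q \<in> ?I" for q
  proof -
    have m: "set_borel_measurable lborel ?I (\<lambda>t. F2 R l t q)" by (rule set_meas_sec2[OF mF2 q])
    have "(LINT t:?I|lborel. F2 R l t q) = (LINT s:?I|lborel. (dd q / ((cos s)\<^sup>2 + (dd q)\<^sup>2 * (sin s)\<^sup>2)) *\<^sub>R F2 R l (Gm (dd q) s) q)"
      using cov_G[OF dpos m] by blast
    also have "\<dots> = (LINT s:?I|lborel. mid_integrand R l s q)"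
    proof (rule set_lebesgue_integral_cong)
      show "?I \<in> sets lborel" by simp
      show "\<forall>s. s \<in> ?I \<longrightarrow> (dd q / ((cos s)\<^sup>2 + (dd q)\<^sup>2 * (sin s)\<^sup>2)) *\<^sub>R F2 R l (Gm (dd q) s) q = mid_integrand R l s q"
        using stepC_eq[OF l _ q] unfolding dd_def by blast
    qed
    finally show ?thesis .
  qed
  have first: "(LINT t:?I|lborel. (LINT p:?I|lborel. lhs_integrand R l t p))
           = (LINT t:?I|lborel. (LINT p:?I|lborel. mid_integrand R l t p))"
  proof -
    have "(LINT t:?I|lborel. (LINT p:?I|lborel. lhs_integrand R l t p)) = (LINT t:?I|lborel. (LINT q:?I|lborel. F2 R l t q))"
      by (rule set_lebesgue_integral_cong) (use A in auto)
    also have "\<dots> = (LINT q:?I|lborel. (LINT t:?I|lborel. F2 R l t q))"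
      by (rule set_fubini_swap[OF intF2])
    also have "\<dots> = (LINT q:?I|lborel. (LINT s:?I|lborel. mid_integrand R l s q))"
      by (rule set_lebesgue_integral_cong) (use C in auto)
    also have "\<dots> = (LINT s:?I|lborel. (LINT q:?I|lborel. mid_integrand R l s q))"
      by (rule set_fubini_swap[OF int2', symmetric])
    finally show ?thesis .
  qed
  have second: "(LINT t:?I|lborel. (LINT p:?I|lborel. mid_integrand R l t p)) = octant_surface_integral (rhs_integrand R l)"
  proof -
    have "octant_surface_integral (rhs_integrand R l) = (LINT z:?I \<times> ?I|lborel \<Otimes>\<^sub>M lborel. mid_integrand R l (fst z) (snd z))"
      unfolding octant_surface_integral_def octant_square_def
      by (rule set_lebesgue_integral_cong) (use octant_eq[OF l] in auto)
    also have "\<dots> = (LINT t:?I|lborel. (LINT p:?I|lborel. mid_integrand R l t p))"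
      by (rule set_fubini_prod[OF int2'])
    finally show ?thesis by simp
  qed
  show ?thesis using first second by simp
qed


end
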